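(* Let $\mathcal X,\mathcal U$ be finite nonempty sets, $f:\mathcal X\times\mathcal U\to\mathcal X$ and $g:\mathcal X\to\mathbb R$. Let $v_{\mathrm A}^*(x)=\max_{\mathbf u\in\mathbb U}\min_{\tau\in\mathbb N} g(\xi_x^{\mathbf u}(\tau))$. Then there is a policy $\pi\in\Pi$ such that $v_{\mathrm A}^*(x)=\min_{\tau\in\mathbb N} g(\xi_x^\pi(\tau))$ for all $x\in\mathcal X$.
   Context: $\mathbb N=\{0,1,\dots\}$; $\Pi$ is the set of maps $\mathcal X\to\mathcal U$; $\mathbb U$ is the set of sequences $\mathbb N\to\mathcal U$. For $\pi\in\Pi$: $\xi_x^\pi(0)=x$, $\xi_x^\pi(t+1)=f(\xi_x^\pi(t),\pi(\xi_x^\pi(t)))$. For $\mathbf u\in\mathbb U$: $\xi_x^{\mathbf u}(0)=x$, $\xi_x^{\mathbf u}(t+1)=f(\xi_x^{\mathbf u}(t),\mathbf u(t))$. *)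

theory Defs
  imports "HOL-Analysis.Analysis"
begin

primrec traj_pol :: "('x \<Rightarrow> 'u \<Rightarrow> 'x) \<Rightarrow> ('x \<Rightarrow> 'u) \<Rightarrow> 'x \<Rightarrow> nat \<Rightarrow> 'x" where
  "traj_pol f p x 0 = x"
| "traj_pol f p x (Suc t) = f (traj_pol f p x t) (p (traj_pol f p x t))"

primrec traj_seq :: "('x \<Rightarrow> 'u \<Rightarrow> 'x) \<Rightarrow> (nat \<Rightarrow> 'u) \<Rightarrow> 'x \<Rightarrow> nat \<Rightarrow> 'x" where
  "traj_seq f u x 0 = x"
| "traj_seq f u x (Suc t) = f (traj_seq f u x t) (u t)"

text \<open>v_A^*(x) = max over input sequences of min over times of g along the trajectory.
  Both min and max are over finite sets of values since the state space is finite.\<close>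
definition vA :: "('x::finite \<Rightarrow> 'u \<Rightarrow> 'x) \<Rightarrow> ('x \<Rightarrow> real) \<Rightarrow> 'x \<Rightarrow> real" where
  "vA f g x = Max ((\<lambda>u. Min (range (\<lambda>\<tau>. g (traj_seq f u x \<tau>)))) ` (UNIV :: (nat \<Rightarrow> 'u) set))"

end

theory Submission
  imports Defs
begin

definition J :: "('x::finite \<Rightarrow> 'u \<Rightarrow> 'x) \<Rightarrow> ('x \<Rightarrow> real) \<Rightarrow> (nat \<Rightarrow> 'u) \<Rightarrow> 'x \<Rightarrow> real" where
  "J f g u x = Min (range (\<lambda>\<tau>. g (traj_seq f u x \<tau>)))"

lemma fin_rng: "finite (range (\<lambda>\<tau>. (g::'x::finite \<Rightarrow> real) (h \<tau>)))"
proof -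
  have "range (\<lambda>\<tau>. g (h \<tau>)) \<subseteq> range g" by auto
  then show ?thesis by (rule finite_subset) simp
qed

lemma J_le: "J f g u x \<le> g (traj_seq f u x t)"
  unfolding J_def by (rule Min_le[OF fin_rng]) auto

lemma J_in: "J f g u x \<in> range g"
proof -
  have "J f g u x \<in> range (\<lambda>\<tau>. g (traj_seq f u x \<tau>))"
    unfolding J_def by (rule Min_in[OF fin_rng]) auto
  then show ?thesis by auto
qed

lemma finJ: "finite ((\<lambda>u. J f g u x) ` UNIV)"
proof -
  have "(\<lambda>u. J f g u x) ` UNIV \<subseteq> range g" using J_in by auto
  then show ?thesis by (rule finite_subset) simp
qed

lemma vA_J: "vA f g x = Max ((\<lambda>u. J f g u x) ` UNIV)"
  unfolding vA_def J_def by simp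

lemma vA_ge: "J f g u x \<le> vA f g x"
  unfolding vA_J by (rule Max_ge[OF finJ]) auto

lemma vA_ex: "\<exists>u. vA f g x = J f g u x"
proof -
  have "vA f g x \<in> (\<lambda>u. J f g u x) ` UNIV"
    unfolding vA_J by (rule Max_in[OF finJ]) auto
  then show ?thesis by auto
qed

lemma vA_le_g: "vA f g x \<le> g x"
  unfolding vA_J
proof (subst Max_le_iff[OF finJ])
  show "(\<lambda>u. J f g u x) ` UNIV \<noteq> {}" by auto
  show "\<forall>a\<in>(\<lambda>u. J f g u x) ` UNIV. a \<le> g x"
    using J_le[where t=0] by auto
qed

lemma shift: "traj_seq f u x (Suc t) = traj_seq f (\<lambda>n. u (Suc n)) (f x (u 0)) t"
  by (induction t) auto

lemma J_shift: "J f g u x \<le> J f g (\<lambda>n. u (Suc n)) (f x (u 0))"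
  unfolding J_def[of f g "\<lambda>n. u (Suc n)"]
proof (subst Min_ge_iff[OF fin_rng])
  show "range (\<lambda>\<tau>. g (traj_seq f (\<lambda>n. u (Suc n)) (f x (u 0)) \<tau>)) \<noteq> {}" by auto
  show "\<forall>a\<in>range (\<lambda>\<tau>. g (traj_seq f (\<lambda>n. u (Suc n)) (f x (u 0)) \<tau>)). J f g u x \<le> a"
  proof
    fix a assume "a \<in> range (\<lambda>\<tau>. g (traj_seq f (\<lambda>n. u (Suc n)) (f x (u 0)) \<tau>))"
    then obtain t where "a = g (traj_seq f (\<lambda>n. u (Suc n)) (f x (u 0)) t)" by auto
    then have "a = g (traj_seq f u x (Suc t))" by (simp only: shift)
    then show "J f g u x \<le> a" using J_le[of f g u x "Suc t"] by simp
  qed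
qed

theorem mainTheorem3:
  fixes f :: "'x::finite \<Rightarrow> 'u::finite \<Rightarrow> 'x" and g :: "'x \<Rightarrow> real"
  shows "\<exists>p :: 'x \<Rightarrow> 'u. \<forall>x. vA f g x = Min (range (\<lambda>\<tau>. g (traj_pol f p x \<tau>)))"
proof -
  define us where "us x = (SOME u. vA f g x = J f g u x)" for x
  have us: "vA f g x = J f g (us x) x" for x
    unfolding us_def using vA_ex by (rule someI_ex)
  define p where "p x = us x 0" for x
  have step: "vA f g x \<le> vA f g (f x (p x))" for x
    using us[of x] J_shift[of f g "us x" x] vA_ge[of f g "\<lambda>n. us x (Suc n)" "f x (us x 0)"]
    unfolding p_def by linarith
  have mono: "vA f g x \<le> vA f g (traj_pol f p x t)" for x t
  proof (induction t)
    case 0 then show ?case by simp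
  next
    case (Suc t) then show ?case using step[of "traj_pol f p x t"] by simp
  qed
  have eq: "traj_seq f (\<lambda>t. p (traj_pol f p x t)) x t = traj_pol f p x t" for x t
    by (induction t) auto
  show ?thesis
  proof (intro exI allI antisym)
    fix x
    show "vA f g x \<le> Min (range (\<lambda>\<tau>. g (traj_pol f p x \<tau>)))"
    proof (subst Min_ge_iff[OF fin_rng])
      show "range (\<lambda>\<tau>. g (traj_pol f p x \<tau>)) \<noteq> {}" by auto
      show "\<forall>a\<in>range (\<lambda>\<tau>. g (traj_pol f p x \<tau>)). vA f g x \<le> a"
        using mono vA_le_g order_trans by blast
    qed
    show "Min (range (\<lambda>\<tau>. g (traj_pol f p x \<tau>))) \<le> vA f g x"
      using vA_ge[of f g "\<lambda>t. p (traj_pol f p x t)" x] unfolding J_def eq .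
  qed
qed

end
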